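(* Let $p,q\ge 1$ be integers, $C$ a finite set, and $M\in\mathcal M(p,q,C)$. Let $\gamma\in C$ be a colour of frequency $l$ in $M$. Then: (1) $l\le\min(p,q)$; (2) $\operatorname{exc}(\gamma)\ge 0$; (3) if $l=\operatorname{frq}(M)$, then $|C|\le\lfloor pq/l\rfloor$.
   Context: $\mathcal M(p,q,C)$ is the set of $p\times q$ matrices $M$ with entries from $C$ such that each row of $M$ has $q$ pairwise distinct entries, each column has $p$ pairwise distinct entries, and every pair $\{\alpha,\beta\}$ of distinct colours of $C$ is good: there is a row or a column of $M$ containing both $\alpha$ and $\beta$. The frequency $\operatorname{frq}(\gamma)$ of $\gamma\in C$ is the number of entries of $M$ equal to $\gamma$, and $\operatorname{frq}(M)$ is the minimum frequency over all colours of $C$. The excess of a colour $\gamma$ of frequency $l$ is $\operatorname{exc}(\gamma)=l(p+q-l-1)-(|C|-1)$. *)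

theory Defs
  imports Main
begin

text \<open>A p x q matrix is a function M :: nat => nat => 'c, entry M i j for i < p, j < q.\<close>

definition row_set :: "(nat \<Rightarrow> nat \<Rightarrow> 'c) \<Rightarrow> nat \<Rightarrow> nat \<Rightarrow> 'c set" where
  "row_set M q i = (\<lambda>j. M i j) ` {..<q}"

definition col_set :: "(nat \<Rightarrow> nat \<Rightarrow> 'c) \<Rightarrow> nat \<Rightarrow> nat \<Rightarrow> 'c set" where
  "col_set M p j = (\<lambda>i. M i j) ` {..<p}"

definition good_pair :: "nat \<Rightarrow> nat \<Rightarrow> (nat \<Rightarrow> nat \<Rightarrow> 'c) \<Rightarrow> 'c \<Rightarrow> 'c \<Rightarrow> bool" where
  "good_pair p q M \<alpha> \<beta> \<longleftrightarrow>
     (\<exists>i<p. \<alpha> \<in> row_set M q i \<and> \<beta> \<in> row_set M q i) \<or>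
     (\<exists>j<q. \<alpha> \<in> col_set M p j \<and> \<beta> \<in> col_set M p j)"

definition in_M :: "nat \<Rightarrow> nat \<Rightarrow> 'c set \<Rightarrow> (nat \<Rightarrow> nat \<Rightarrow> 'c) \<Rightarrow> bool" where
  "in_M p q C M \<longleftrightarrow>
     (\<forall>i<p. \<forall>j<q. M i j \<in> C) \<and>
     (\<forall>i<p. inj_on (\<lambda>j. M i j) {..<q}) \<and>
     (\<forall>j<q. inj_on (\<lambda>i. M i j) {..<p}) \<and>
     (\<forall>\<alpha>\<in>C. \<forall>\<beta>\<in>C. \<alpha> \<noteq> \<beta> \<longrightarrow> good_pair p q M \<alpha> \<beta>)"

definition frq :: "nat \<Rightarrow> nat \<Rightarrow> (nat \<Rightarrow> nat \<Rightarrow> 'c) \<Rightarrow> 'c \<Rightarrow> nat" where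
  "frq p q M \<gamma> = card {(i, j). i < p \<and> j < q \<and> M i j = \<gamma>}"

definition frq_M :: "nat \<Rightarrow> nat \<Rightarrow> 'c set \<Rightarrow> (nat \<Rightarrow> nat \<Rightarrow> 'c) \<Rightarrow> nat" where
  "frq_M p q C M = Min (frq p q M ` C)"

definition exc :: "nat \<Rightarrow> nat \<Rightarrow> 'c set \<Rightarrow> (nat \<Rightarrow> nat \<Rightarrow> 'c) \<Rightarrow> 'c \<Rightarrow> int" where
  "exc p q C M \<gamma> = (let l = int (frq p q M \<gamma>) in
      l * (int p + int q - l - 1) - (int (card C) - 1))"

end

theory Submission
  imports Defs
begin

theorem lemma1:
  fixes p q :: nat and C :: "'c set" and M :: "nat \<Rightarrow> nat \<Rightarrow> 'c" and \<gamma> :: 'c and l :: nat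
  assumes "p \<ge> 1" and "q \<ge> 1" and "finite C" and "in_M p q C M"
    and "\<gamma> \<in> C" and "l = frq p q M \<gamma>"
  shows "l \<le> min p q \<and> exc p q C M \<gamma> \<ge> 0 \<and>
         (l = frq_M p q C M \<longrightarrow> card C \<le> (p * q) div l)"
proof -
  note inM = assms(4)[unfolded in_M_def]
  have inC: "\<And>i j. i < p \<Longrightarrow> j < q \<Longrightarrow> M i j \<in> C" using inM by blast
  have injr: "\<And>i j j'. i < p \<Longrightarrow> j < q \<Longrightarrow> j' < q \<Longrightarrow> M i j = M i j' \<Longrightarrow> j = j'"
    using inM unfolding inj_on_def by blast
  have injc: "\<And>i i' j. i < p \<Longrightarrow> i' < p \<Longrightarrow> j < q \<Longrightarrow> M i j = M i' j \<Longrightarrow> i = i'"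
    using inM unfolding inj_on_def by blast
  have good: "\<And>\<alpha> \<beta>. \<alpha> \<in> C \<Longrightarrow> \<beta> \<in> C \<Longrightarrow> \<alpha> \<noteq> \<beta> \<Longrightarrow> good_pair p q M \<alpha> \<beta>"
    using inM by blast
  define G where "G = {..<p} \<times> {..<q}"
  have fG: "finite G" unfolding G_def by simp
  define F where "F c = {x \<in> G. M (fst x) (snd x) = c}" for c
  have frqF: "frq p q M c = card (F c)" for c
    unfolding frq_def F_def G_def by (rule arg_cong[where f=card]) auto
  define \<Gamma> where "\<Gamma> = F \<gamma>"
  have l\<Gamma>: "l = card \<Gamma>" using assms(6) frqF \<Gamma>_def by simp
  have f\<Gamma>: "finite \<Gamma>" unfolding \<Gamma>_def F_def using fG by simp
  define R where "R = fst ` \<Gamma>"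
  define K where "K = snd ` \<Gamma>"
  have "inj_on fst \<Gamma>"
    unfolding inj_on_def \<Gamma>_def F_def G_def using injr by auto
  hence cR: "card R = l" unfolding R_def l\<Gamma> by (simp add: card_image)
  have "inj_on snd \<Gamma>"
    unfolding inj_on_def \<Gamma>_def F_def G_def using injc by auto
  hence cK: "card K = l" unfolding K_def l\<Gamma> by (simp add: card_image)
  have Rp: "R \<subseteq> {..<p}" unfolding R_def \<Gamma>_def F_def G_def by auto
  have Kq: "K \<subseteq> {..<q}" unfolding K_def \<Gamma>_def F_def G_def by auto
  have lp: "l \<le> p" using card_mono[OF _ Rp] cR by simp
  have lq: "l \<le> q" using card_mono[OF _ Kq] cK by simp
  have fR: "finite R" and fK: "finite K" using Rp Kq finite_subset by auto
  define U where "U = (R \<times> {..<q}) \<union> ({..<p} \<times> K)"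
  have fU: "finite U" unfolding U_def using fR fK by simp
  have "card (R \<times> {..<q}) + card ({..<p} \<times> K) = card U + card ((R \<times> {..<q}) \<inter> ({..<p} \<times> K))"
    unfolding U_def by (rule card_Un_Int) (use fR fK in auto)
  moreover have "(R \<times> {..<q}) \<inter> ({..<p} \<times> K) = R \<times> K" using Rp Kq by auto
  ultimately have cU: "card U + l * l = l * q + p * l"
    using cR cK by (simp add: card_cartesian_product)
  have \<Gamma>U: "\<Gamma> \<subseteq> U"
  proof
    fix x assume x: "x \<in> \<Gamma>"
    hence "fst x \<in> R" unfolding R_def by simp
    moreover have "snd x < q" using x unfolding \<Gamma>_def F_def G_def by auto
    ultimately show "x \<in> U" unfolding U_def by (cases x) auto
  qed
  define S where "S = U - \<Gamma>"
  have cS: "card S + l = card U" unfolding S_def l\<Gamma>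
    using card_Diff_subset[OF f\<Gamma> \<Gamma>U] card_mono[OF fU \<Gamma>U] by simp
  have sub: "C - {\<gamma>} \<subseteq> (\<lambda>x. M (fst x) (snd x)) ` S"
  proof
    fix \<alpha> assume a: "\<alpha> \<in> C - {\<gamma>}"
    hence "good_pair p q M \<alpha> \<gamma>" using good assms(5) by blast
    then show "\<alpha> \<in> (\<lambda>x. M (fst x) (snd x)) ` S"
      unfolding good_pair_def row_set_def col_set_def
    proof (elim disjE exE conjE)
      fix i assume i: "i < p" and "\<alpha> \<in> (\<lambda>j. M i j) ` {..<q}" "\<gamma> \<in> (\<lambda>j. M i j) ` {..<q}"
      then obtain j1 j0 where j: "j1 < q" "\<alpha> = M i j1" "j0 < q" "\<gamma> = M i j0" by auto
      have "(i, j0) \<in> \<Gamma>" unfolding \<Gamma>_def F_def G_def using i j by auto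
      hence "i \<in> R" unfolding R_def by force
      hence "(i, j1) \<in> S" unfolding S_def U_def \<Gamma>_def F_def using j a by auto
      thus ?thesis using j by force
    next
      fix j assume jq: "j < q" and "\<alpha> \<in> (\<lambda>i. M i j) ` {..<p}" "\<gamma> \<in> (\<lambda>i. M i j) ` {..<p}"
      then obtain i1 i0 where i: "i1 < p" "\<alpha> = M i1 j" "i0 < p" "\<gamma> = M i0 j" by auto
      have "(i0, j) \<in> \<Gamma>" unfolding \<Gamma>_def F_def G_def using i jq by auto
      hence "j \<in> K" unfolding K_def by force
      hence "(i1, j) \<in> S" unfolding S_def U_def \<Gamma>_def F_def using i a by auto
      thus ?thesis using i by force
    qed
  qed
  have fS: "finite S" unfolding S_def using fU by simp
  have "card (C - {\<gamma>}) \<le> card S"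
    using card_mono[OF finite_imageI[OF fS] sub] card_image_le[OF fS, of "\<lambda>x. M (fst x) (snd x)"] by linarith
  hence c1: "card C \<le> card S + 1" using card_Diff_singleton[OF assms(5)] assms(3) by simp
  have exc: "exc p q C M \<gamma> \<ge> 0"
  proof -
    have "int (card C) \<le> int (card S) + 1" using c1 by simp
    moreover have "int (card S) + int l + int l * int l = int l * int q + int p * int l"
      using cU cS by (metis of_nat_add of_nat_mult)
    ultimately show ?thesis unfolding exc_def Let_def using assms(6)[symmetric]
      by (simp add: algebra_simps)
  qed
  have part3: "card C \<le> (p * q) div l" if lm: "l = frq_M p q C M"
  proof -
    have ge: "l \<le> frq p q M c" if "c \<in> C" for c
      using lm that assms(3) unfolding frq_M_def by simp
    have disj: "\<forall>i\<in>C. \<forall>j\<in>C. i \<noteq> j \<longrightarrow> F i \<inter> F j = {}" unfolding F_def by auto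
    have finF: "\<forall>i\<in>C. finite (F i)" unfolding F_def using fG by simp
    have UF: "(\<Union>c\<in>C. F c) = G" unfolding F_def G_def using inC by auto
    have "card G = (\<Sum>c\<in>C. card (F c))"
      using card_UN_disjoint[OF assms(3) finF disj] UF by simp
    hence "card C * l \<le> p * q"
      using sum_mono[of C "\<lambda>_. l" "\<lambda>c. card (F c)"] ge frqF unfolding G_def
      by (simp add: card_cartesian_product)
    moreover have "l \<ge> 1"
    proof (rule ccontr)
      assume "\<not> l \<ge> 1"
      hence "card \<Gamma> = 0" using l\<Gamma> by simp
      hence "\<Gamma> = {}" using f\<Gamma> by simp
      hence "M 0 0 \<noteq> \<gamma>" unfolding \<Gamma>_def F_def G_def using assms(1,2) by auto
      hence "M 0 0 \<in> C - {\<gamma>}" using inC assms(1,2) by simp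
      hence "M 0 0 \<in> (\<lambda>x. M (fst x) (snd x)) ` S" using sub by blast
      moreover have "l = 0" using \<open>\<not> l \<ge> 1\<close> by simp
      hence "card S = 0" using cS cU by simp
      hence "S = {}" using fS by simp
      ultimately show False by simp
    qed
    ultimately show ?thesis by (metis div_le_mono nonzero_mult_div_cancel_right not_one_le_zero)
  qed
  show ?thesis using lp lq exc part3 by simp
qed

end
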